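(* Let $n\ge2$, $x_0>0$, $K\ge0$. Let $\mathcal{E}(x_0)$ be the set of measures $\nu$ on $[0,\infty)\times[0,\infty)$ with no mass on $\{(x,y):y<x\text{ or }y<x_0\}$, and let $\mathcal{E}_D(x_0)\subset\mathcal{E}(x_0)$ be the set of probability laws of pairs $(X,Y)$ with $X\le Y$, $X$ a continuous (atom-free) random variable with mean $x_0$, and $\mathbb{E}[X-z;\,Y\ge z]=0$ for all $z\ge x_0$. For a distribution function $F$, reals $\lambda,\gamma$ and a function $\eta$ on $[x_0,\infty)$, define $$\mathcal{L}_F(\nu;\lambda,\gamma,\eta)=\int_0^\infty\!\!\int_0^\infty\Big[(1+K)F(x)^{n-1}-KF(y)^{n-1}-\lambda x-\gamma-\int_{x_0}^{y}\eta(z)(x-z)\,dz\Big]\nu(dx,dy)+\lambda x_0+\gamma$$ (whenever the integrals are well defined). Suppose $\nu^*\in\mathcal{E}_D(x_0)$ and $\lambda^*,\gamma^*,\eta^*$ satisfy $$\mathcal{L}_{G^*}(\nu^*;\lambda^*,\gamma^*,\eta^* )\ge\mathcal{L}_{G^*}(\nu;\lambda^*,\gamma^*,\eta^* )\quad\text{for all }\nu\in\mathcal{E}(x_0),$$ where $G^*(x)=\nu^*([0,x]\times(0,\infty))$. Then $\nu^*$ is a symmetric, atom-free Nash equilibrium, in the sense that $$\int\!\!\int\big[(1+K)G^*(x)^{n-1}-KG^*(y)^{n-1}\big]\nu^*(dx,dy)\ \ge\ \int\!\!\int\big[(1+K)G^*(x)^{n-1}-KG^*(y)^{n-1}\big]\nu(dx,dy)$$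 for every $\nu\in\mathcal{E}(x_0)$ with $\int\!\!\int x\,\nu(dx,dy)=x_0$, $\int\!\!\int\nu(dx,dy)=1$ and $\int_{x=0}^\infty\int_{y=z}^\infty(x-z)\,\nu(dx,dy)=0$ for all $z\ge x_0$.
   Context: Setting: the contest with regret over past failure to stop. Each of $n$ players stops an independent Brownian motion $X^i$ started at $x_0$ and absorbed at $0$ at a stopping time $\tau^i$ of her own filtration, and $M^i=\sup_{t\le\tau^i}X^i_t$. Player $i$ wins 1 if her stopped value is strictly highest, and is penalised $K$ if her stopped value is not highest but $M^i$ exceeds all other stopped values. If the other players' stopped values have the atom-free law $F$, player $i$'s expected payoff when $(X^i_{\tau^i},M^i)$ has law $\nu$ equals $\int\!\!\int[(1+K)F(x)^{n-1}-KF(y)^{n-1}]\nu(dx,dy)$; the three displayed constraints are those satisfied by the law of $(X_{\tau},M_{\tau})$ for a uniformly integrable stopped martingale with mean $x_0$. A symmetric atom-free Nash equilibrium is a law $\nu^*$ that maximizes this expected payoff, with $F=G^*$ the $x$-marginal of $\nu^*$, over the feasible laws, as displayed in the conclusion. *)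

theory Defs
  imports "HOL-Probability.Probability"
begin

definition E_set :: "real \<Rightarrow> (real \<times> real) measure set" where
  "E_set x0 = {\<nu>. sets \<nu> = sets borel \<and>
     emeasure \<nu> {p. \<not> (0 \<le> fst p \<and> 0 \<le> snd p \<and> fst p \<le> snd p \<and> x0 \<le> snd p)} = 0}"

definition ED_set :: "real \<Rightarrow> (real \<times> real) measure set" where
  "ED_set x0 = {\<nu> \<in> E_set x0. prob_space \<nu> \<and>
     (\<forall>x. emeasure \<nu> ({x} \<times> UNIV) = 0) \<and>
     integrable \<nu> fst \<and> (\<integral>p. fst p \<partial>\<nu>) = x0 \<and>
     (\<forall>z\<ge>x0. (\<integral>p. (if z \<le> snd p then fst p - z else 0) \<partial>\<nu>) = 0)}"

definition Gstar :: "(real \<times> real) measure \<Rightarrow> real \<Rightarrow> real" where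
  "Gstar \<nu> x = measure \<nu> ({0..x} \<times> {0<..})"

definition payoff :: "nat \<Rightarrow> real \<Rightarrow> (real \<Rightarrow> real) \<Rightarrow> real \<times> real \<Rightarrow> real" where
  "payoff n K F p = (1 + K) * F (fst p) ^ (n - 1) - K * F (snd p) ^ (n - 1)"

definition lag_integrand :: "nat \<Rightarrow> real \<Rightarrow> (real \<Rightarrow> real) \<Rightarrow> real \<Rightarrow> real \<Rightarrow> real
    \<Rightarrow> (real \<Rightarrow> real) \<Rightarrow> real \<times> real \<Rightarrow> real" where
  "lag_integrand n K F x0 lam gam eta p =
     payoff n K F p - lam * fst p - gam - (LBINT z=x0..snd p. eta z * (fst p - z))"

definition lag_defined :: "nat \<Rightarrow> real \<Rightarrow> (real \<Rightarrow> real) \<Rightarrow> real \<Rightarrow> real \<Rightarrow> real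
    \<Rightarrow> (real \<Rightarrow> real) \<Rightarrow> (real \<times> real) measure \<Rightarrow> bool" where
  "lag_defined n K F x0 lam gam eta \<nu> \<longleftrightarrow>
     (AE p in \<nu>. set_integrable lborel {x0..snd p} (\<lambda>z. eta z * (fst p - z))) \<and>
     integrable \<nu> (lag_integrand n K F x0 lam gam eta)"

definition lag_val :: "nat \<Rightarrow> real \<Rightarrow> (real \<Rightarrow> real) \<Rightarrow> real \<Rightarrow> real \<Rightarrow> real
    \<Rightarrow> (real \<Rightarrow> real) \<Rightarrow> (real \<times> real) measure \<Rightarrow> real" where
  "lag_val n K F x0 lam gam eta \<nu> =
     (\<integral>p. lag_integrand n K F x0 lam gam eta p \<partial>\<nu>) + lam * x0 + gam"

end

theory Submission
  imports Defs
begin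

lemma fst_bm: "(fst::real\<times>real\<Rightarrow>real) \<in> borel_measurable borel"
  by (rule borel_measurable_continuous_onI) (intro continuous_intros)
lemma snd_bm: "(snd::real\<times>real\<Rightarrow>real) \<in> borel_measurable borel"
  by (rule borel_measurable_continuous_onI) (intro continuous_intros)

lemma sets_bm:
  assumes "sets (M::(real\<times>real) measure) = sets borel"
  shows "fst \<in> borel_measurable M" "snd \<in> borel_measurable M"
  using fst_bm snd_bm measurable_cong_sets[OF assms refl] by auto

lemma seti_meas:
  assumes "set_integrable lborel A (eta::real\<Rightarrow>real)"
  shows "(\<lambda>z. indicator A z * eta z) \<in> borel_measurable borel"
proof -
  have "(\<lambda>z. indicator A z *\<^sub>R eta z) \<in> borel_measurable lborel"
    using assms unfolding set_integrable_def by (rule borel_measurable_integrable)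
  then show ?thesis by simp
qed

lemma seti_mult_bounded:
  fixes eta :: "real \<Rightarrow> real"
  assumes "set_integrable lborel {a..b} eta"
    and "\<And>z. z \<in> {a..b} \<Longrightarrow> \<bar>h z\<bar> \<le> C"
    and "h \<in> borel_measurable borel"
  shows "set_integrable lborel {a..b} (\<lambda>z. eta z * h z)"
proof (rule set_integrable_bound)
  show "set_integrable lborel {a..b} (\<lambda>z. eta z * C)"
    using assms(1) by (rule set_integrable_mult_left)
  have "(\<lambda>z. (indicator {a..b} z * eta z) * h z) \<in> borel_measurable borel"
    using seti_meas[OF assms(1)] assms(3) by measurable
  then show "set_borel_measurable lborel {a..b} (\<lambda>z. eta z * h z)"
    unfolding set_borel_measurable_def by (simp add: mult.assoc)
  show "AE x in lborel. x \<in> {a..b} \<longrightarrow> norm (eta x * h x) \<le> norm (eta x * C)"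
  proof (rule AE_I2, intro impI)
    fix x assume x: "x \<in> {a..b}"
    have "\<bar>h x\<bar> \<le> \<bar>C\<bar>" using assms(2)[OF x] by simp
    then show "norm (eta x * h x) \<le> norm (eta x * C)"
      by (simp add: abs_mult mult_left_mono)
  qed
qed

lemma seti_mult_lin:
  fixes eta :: "real \<Rightarrow> real"
  assumes "set_integrable lborel {a..b} eta"
  shows "set_integrable lborel {a..b} (\<lambda>z. eta z * (x - z))"
  by (rule seti_mult_bounded[OF assms, where C="\<bar>x\<bar> + \<bar>a\<bar> + \<bar>b\<bar>"]) auto

lemma fubini_zero:
  fixes \<nu> :: "(real \<times> real) measure" and eta :: "real \<Rightarrow> real"
  assumes fin: "finite_measure \<nu>" and sets: "sets \<nu> = sets borel"
    and eta: "set_integrable lborel {x0..R} eta"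
    and AEy: "AE p in \<nu>. x0 \<le> snd p \<and> snd p \<le> R"
    and ifst: "integrable \<nu> fst"
    and C: "\<And>z. z \<in> {x0..R} \<Longrightarrow> (\<integral>p. (if z \<le> snd p then fst p - z else 0) \<partial>\<nu>) = 0"
    and hm: "(\<lambda>p. LBINT z=ereal x0..ereal (snd p). eta z * (fst p - z)) \<in> borel_measurable borel"
  shows "integrable \<nu> (\<lambda>p. LBINT z=ereal x0..ereal (snd p). eta z * (fst p - z))"
    and "(\<integral>p. (LBINT z=ereal x0..ereal (snd p). eta z * (fst p - z)) \<partial>\<nu>) = 0"
proof -
  interpret finite_measure \<nu> by (rule fin)
  have [measurable]: "fst \<in> borel_measurable \<nu>" "snd \<in> borel_measurable \<nu>"
    using sets_bm[OF sets] by auto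
  interpret P: pair_sigma_finite \<nu> lborel
    by (simp add: pair_sigma_finite_def sigma_finite_measure_axioms lborel.sigma_finite_measure_axioms)
  define e where "e z = indicator {x0..R} z * eta z" for z
  have em[measurable]: "e \<in> borel_measurable borel" unfolding e_def by (rule seti_meas[OF eta])
  have eint: "integrable lborel e" using eta unfolding set_integrable_def e_def by simp
  define F where "F = (\<lambda>(p::real\<times>real, z::real). e z * (if z \<le> snd p then fst p - z else 0))"
  have Fm[measurable]: "F \<in> borel_measurable (\<nu> \<Otimes>\<^sub>M lborel)"
    unfolding F_def by measurable
  define c where "c = \<bar>x0\<bar> + \<bar>R\<bar>"
  define E where "E = (\<integral>z. \<bar>e z\<bar> \<partial>lborel)"
  have bnd: "\<bar>F (p, z)\<bar> \<le> \<bar>e z\<bar> * (\<bar>fst p\<bar> + c)" for p z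
  proof (cases "z \<in> {x0..R} \<and> z \<le> snd p")
    case True
    then have "\<bar>fst p - z\<bar> \<le> \<bar>fst p\<bar> + c" unfolding c_def by auto
    then show ?thesis using True unfolding F_def by (simp add: abs_mult mult_left_mono)
  next
    case False
    then show ?thesis unfolding F_def e_def c_def by (auto simp: abs_mult)
  qed
  have Fint2: "integrable lborel (\<lambda>z. F (p, z))" for p
  proof (rule Bochner_Integration.integrable_bound)
    show "integrable lborel (\<lambda>z. e z * (\<bar>fst p\<bar> + c))" using eint by simp
    have "(\<lambda>z. F (p, z)) = (\<lambda>z. e z * (if z \<le> snd p then fst p - z else 0))"
      by (simp add: F_def)
    then show "(\<lambda>z. F (p, z)) \<in> borel_measurable lborel" by simp
    show "AE z in lborel. norm (F (p, z)) \<le> norm (e z * (\<bar>fst p\<bar> + c))"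
      using bnd[of p] by (auto simp: abs_mult intro!: order_trans[OF bnd] mult_left_mono)
  qed
  have Fint: "integrable (\<nu> \<Otimes>\<^sub>M lborel) F"
  proof (rule P.Fubini_integrable)
    show "F \<in> borel_measurable (\<nu> \<Otimes>\<^sub>M lborel)" by (rule Fm)
    show "AE p in \<nu>. integrable lborel (\<lambda>z. F (p, z))" using Fint2 by simp
    show "integrable \<nu> (\<lambda>p. \<integral>z. norm (F (p, z)) \<partial>lborel)"
    proof (rule Bochner_Integration.integrable_bound)
      show "integrable \<nu> (\<lambda>p. (\<bar>fst p\<bar> + c) * E)"
        using ifst by (intro integrable_mult_left integrable_add integrable_abs) auto
      show "(\<lambda>p. \<integral>z. norm (F (p, z)) \<partial>lborel) \<in> borel_measurable \<nu>"
        by measurable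
      show "AE p in \<nu>. norm (\<integral>z. norm (F (p, z)) \<partial>lborel) \<le> norm ((\<bar>fst p\<bar> + c) * E)"
      proof (rule AE_I2)
        fix p
        have "(\<integral>z. norm (F (p, z)) \<partial>lborel) \<le> (\<integral>z. \<bar>e z\<bar> * (\<bar>fst p\<bar> + c) \<partial>lborel)"
          using Fint2[of p] eint bnd[of p] by (intro integral_mono) auto
        also have "\<dots> = (\<bar>fst p\<bar> + c) * E" unfolding E_def by simp
        finally have "(\<integral>z. norm (F (p, z)) \<partial>lborel) \<le> (\<bar>fst p\<bar> + c) * E" .
        moreover have "0 \<le> (\<integral>z. norm (F (p, z)) \<partial>lborel)" by simp
        moreover have "0 \<le> E" unfolding E_def by simp
        ultimately show "norm (\<integral>z. norm (F (p, z)) \<partial>lborel) \<le> norm ((\<bar>fst p\<bar> + c) * E)"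
          unfolding c_def by simp
      qed
    qed
  qed
  have eqh: "(LBINT z=ereal x0..ereal (snd p). eta z * (fst p - z)) = (\<integral>z. F (p, z) \<partial>lborel)"
    if "x0 \<le> snd p" "snd p \<le> R" for p
  proof -
    have "(LBINT z=ereal x0..ereal (snd p). eta z * (fst p - z)) = (LBINT z:{x0..snd p}. eta z * (fst p - z))"
      using that by (simp add: interval_integral_Icc)
    also have "\<dots> = (\<integral>z. F (p, z) \<partial>lborel)"
      unfolding set_lebesgue_integral_def F_def e_def
      using that by (intro Bochner_Integration.integral_cong) (auto simp: indicator_def)
    finally show ?thesis .
  qed
  have AEeq: "AE p in \<nu>. (LBINT z=ereal x0..ereal (snd p). eta z * (fst p - z)) = (\<integral>z. F (p, z) \<partial>lborel)"
    using AEy by eventually_elim (auto intro: eqh)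
  have hmn: "(\<lambda>p. LBINT z=ereal x0..ereal (snd p). eta z * (fst p - z)) \<in> borel_measurable \<nu>"
    by (subst measurable_cong_sets[OF sets refl]) (rule hm)
  have intF1: "integrable \<nu> (\<lambda>p. \<integral>z. F (p, z) \<partial>lborel)"
    using P.integrable_fst'[OF Fint] by simp
  show "integrable \<nu> (\<lambda>p. LBINT z=ereal x0..ereal (snd p). eta z * (fst p - z))"
    using intF1 AEeq hmn by (subst integrable_cong_AE) auto
  have "(\<integral>p. (LBINT z=ereal x0..ereal (snd p). eta z * (fst p - z)) \<partial>\<nu>) = (\<integral>p. (\<integral>z. F (p, z) \<partial>lborel) \<partial>\<nu>)"
    using AEeq hmn by (intro integral_cong_AE) auto
  also have "\<dots> = (\<integral>z. (\<integral>p. F (p, z) \<partial>\<nu>) \<partial>lborel)"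
    using P.Fubini_integral[of "\<lambda>p z. F (p, z)"] Fint by simp
  also have "\<dots> = (\<integral>z. 0 \<partial>lborel)"
  proof -
    have "(\<integral>p. F (p, z) \<partial>\<nu>) = 0" for z
    proof -
      have "(\<integral>p. F (p, z) \<partial>\<nu>) = e z * (\<integral>p. (if z \<le> snd p then fst p - z else 0) \<partial>\<nu>)"
        unfolding F_def by simp
      also have "\<dots> = 0" using C[of z] unfolding e_def by (cases "z \<in> {x0..R}") auto
      finally show ?thesis .
    qed
    then show ?thesis by simp
  qed
  finally show "(\<integral>p. (LBINT z=ereal x0..ereal (snd p). eta z * (fst p - z)) \<partial>\<nu>) = 0" by simp
qed

lemma strict_constraint:
  fixes \<nu> :: "(real \<times> real) measure"
  assumes fin: "finite_measure \<nu>" and sets: "sets \<nu> = sets borel"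
    and ifst: "integrable \<nu> fst"
    and C: "\<forall>z\<ge>x0. (\<integral>p. (if z \<le> snd p then fst p - z else 0) \<partial>\<nu>) = 0"
    and R: "x0 \<le> R"
  shows "(\<integral>p. (if R < snd p then fst p - R else 0) \<partial>\<nu>) = 0"
proof -
  interpret finite_measure \<nu> by (rule fin)
  have [measurable]: "fst \<in> borel_measurable \<nu>" "snd \<in> borel_measurable \<nu>"
    using sets_bm[OF sets] by auto
  define s where "s i p = (if R + 1 / Suc i \<le> snd p then fst p - (R + 1 / Suc i) else 0)" for i p
  have "(\<lambda>i. \<integral>p. s i p \<partial>\<nu>) \<longlonglongrightarrow> (\<integral>p. (if R < snd p then fst p - R else 0) \<partial>\<nu>)"
  proof (rule integral_dominated_convergence[where w="\<lambda>p. \<bar>fst p\<bar> + \<bar>R\<bar> + 1"])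
    show "(\<lambda>p. if R < snd p then fst p - R else 0) \<in> borel_measurable \<nu>" by measurable
    show "s i \<in> borel_measurable \<nu>" for i unfolding s_def by measurable
    show "integrable \<nu> (\<lambda>p. \<bar>fst p\<bar> + \<bar>R\<bar> + 1)"
      using ifst by (intro Bochner_Integration.integrable_add integrable_abs) auto
    show "AE p in \<nu>. norm (s i p) \<le> \<bar>fst p\<bar> + \<bar>R\<bar> + 1" for i
    proof (rule AE_I2)
      fix p :: "real \<times> real"
      define t where "t = 1 / real (Suc i)"
      have "0 \<le> t" "t \<le> 1" unfolding t_def by (auto simp: field_simps)
      then have "\<bar>fst p - (R + t)\<bar> \<le> \<bar>fst p\<bar> + \<bar>R\<bar> + 1" by linarith
      then show "norm (s i p) \<le> \<bar>fst p\<bar> + \<bar>R\<bar> + 1" unfolding s_def t_def by auto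
    qed
    show "AE p in \<nu>. (\<lambda>i. s i p) \<longlonglongrightarrow> (if R < snd p then fst p - R else 0)"
    proof (rule AE_I2)
      fix p
      have lim: "(\<lambda>i. R + 1 / real (Suc i)) \<longlonglongrightarrow> R"
        using tendsto_add[OF tendsto_const LIMSEQ_inverse_real_of_nat] by (simp add: inverse_eq_divide)
      show "(\<lambda>i. s i p) \<longlonglongrightarrow> (if R < snd p then fst p - R else 0)"
      proof (cases "R < snd p")
        case True
        have "eventually (\<lambda>i. R + 1 / real (Suc i) < snd p) sequentially"
          using order_tendstoD(2)[OF lim True] .
        then have "eventually (\<lambda>i. s i p = fst p - (R + 1 / real (Suc i))) sequentially"
          by eventually_elim (simp add: s_def)
        moreover have "(\<lambda>i. fst p - (R + 1 / real (Suc i))) \<longlonglongrightarrow> fst p - R"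
          by (intro tendsto_intros lim)
        ultimately show ?thesis using True by (simp add: tendsto_cong)
      next
        case False
        have "s i p = 0" for i
        proof -
          have pos: "0 < 1 / real (Suc i)" by simp
          have "\<not> (R + 1 / real (Suc i) \<le> snd p)" using False pos by linarith
          then show ?thesis unfolding s_def by (simp only: if_False)
        qed
        then show ?thesis using False by simp
      qed
    qed
  qed
  moreover have "(\<integral>p. s i p \<partial>\<nu>) = 0" for i
  proof -
    have "x0 \<le> R + 1 / real (Suc i)" using R by (simp add: add_increasing2)
    then show ?thesis using C unfolding s_def by blast
  qed
  ultimately show ?thesis using LIMSEQ_unique by (simp add: LIMSEQ_const_iff)
qed

lemma tail_zero:
  fixes \<nu> :: "(real \<times> real) measure" and f :: "real \<times> real \<Rightarrow> real"
  assumes sets: "sets \<nu> = sets borel" and f: "integrable \<nu> f"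
    and ev: "AE p in \<nu>. eventually (\<lambda>k. snd p \<le> R k) sequentially"
  shows "(\<lambda>k. \<integral>p. (if R k < snd p then f p else 0) \<partial>\<nu>) \<longlonglongrightarrow> 0"
proof -
  have [measurable]: "fst \<in> borel_measurable \<nu>" "snd \<in> borel_measurable \<nu>"
    using sets_bm[OF sets] by auto
  have fm[measurable]: "f \<in> borel_measurable \<nu>" using f by (rule borel_measurable_integrable)
  have "(\<lambda>k. \<integral>p. (if R k < snd p then f p else 0) \<partial>\<nu>) \<longlonglongrightarrow> (\<integral>p. 0 \<partial>\<nu>)"
  proof (rule integral_dominated_convergence[where w="\<lambda>p. \<bar>f p\<bar>"])
    show "(\<lambda>p. 0::real) \<in> borel_measurable \<nu>" by simp
    show "(\<lambda>p. if R k < snd p then f p else 0) \<in> borel_measurable \<nu>" for k by measurable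
    show "integrable \<nu> (\<lambda>p. \<bar>f p\<bar>)" using f by auto
    show "AE p in \<nu>. norm (if R k < snd p then f p else 0) \<le> \<bar>f p\<bar>" for k by auto
    show "AE p in \<nu>. (\<lambda>k. if R k < snd p then f p else 0) \<longlonglongrightarrow> 0"
      using ev
    proof eventually_elim
      case (elim p)
      then have "eventually (\<lambda>k. (if R k < snd p then f p else 0) = 0) sequentially"
        by eventually_elim auto
      then show ?case by (rule tendsto_eventually)
    qed
  qed
  then show ?thesis by simp
qed

lemma inv_sq_int:
  fixes a b :: real
  assumes "0 < a" "a \<le> b"
  shows "set_integrable lborel {a..b} (\<lambda>y. 1 / y^2)"
    and "(LBINT y:{a..b}. 1 / y^2) = 1/a - 1/b"
proof -
  show "set_integrable lborel {a..b} (\<lambda>y. 1 / y^2)"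
    using assms by (intro borel_integrable_atLeastAtMost') (auto intro!: continuous_intros)
  have "(LBINT y=a..b. 1 / y^2) = (- 1 / b) - (- 1 / a)"
  proof (rule interval_integral_FTC_finite)
    show "continuous_on {min a b..max a b} (\<lambda>y. 1 / y^2)"
      using assms by (intro continuous_intros) auto
    fix x assume x: "min a b \<le> x" "x \<le> max a b"
    then have xp: "0 < x" using assms by auto
    have "((\<lambda>y. - 1 / y) has_real_derivative (1 / x^2)) (at x)"
      using xp by (auto intro!: derivative_eq_intros simp: power2_eq_square field_simps)
    then show "((\<lambda>y. - 1 / y) has_vector_derivative (1 / x^2)) (at x within {min a b..max a b})"
      by (simp add: has_real_derivative_iff_has_vector_derivative has_vector_derivative_at_within)
  qed
  then show "(LBINT y:{a..b}. 1 / y^2) = 1/a - 1/b"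
    using assms by (simp add: interval_integral_Icc)
qed

lemma ibound:
  fixes eta :: "real \<Rightarrow> real"
  assumes x0: "0 < x0" "x0 \<le> R" and eta: "set_integrable lborel {x0..R} eta"
    and bb: "\<And>y. y \<in> {x0..R} \<Longrightarrow> (LBINT z:{x0..y}. z * eta z) \<le> Mb" and Mb: "0 \<le> Mb"
  shows "(LBINT z:{x0..R}. eta z * (R - z)) \<le> Mb * R / x0"
proof -
  have P: "pair_sigma_finite lborel lborel"
    by (simp add: pair_sigma_finite_def lborel.sigma_finite_measure_axioms)
  define e where "e z = indicator {x0..R} z * eta z" for z
  have em[measurable]: "e \<in> borel_measurable borel" unfolding e_def by (rule seti_meas[OF eta])
  have eint: "integrable lborel e" using eta unfolding set_integrable_def e_def by simp
  define F where "F = (\<lambda>(y::real, z::real). e z * (if z \<le> y \<and> y \<le> R then z / y^2 else 0))"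
  have Fm[measurable]: "F \<in> borel_measurable (lborel \<Otimes>\<^sub>M lborel)"
    unfolding F_def by measurable
  define c where "c = R / x0^2"
  define E where "E = (\<integral>z. \<bar>e z\<bar> \<partial>lborel)"
  have Rp: "0 < R" using x0 by simp
  have cnn: "0 \<le> c" unfolding c_def using x0 by simp
  have bnd: "\<bar>F (y, z)\<bar> \<le> indicator {x0..R} y * (\<bar>e z\<bar> * c)" for y z
  proof (cases "z \<in> {x0..R} \<and> z \<le> y \<and> y \<le> R")
    case True
    then have y: "x0 \<le> y" "y \<le> R" and z: "x0 \<le> z" "z \<le> R" by auto
    have "x0^2 \<le> y^2" using y x0 by (intro power_mono) auto
    then have "z / y^2 \<le> R / x0^2" using z y x0
      by (intro frac_le) auto
    moreover have "0 \<le> z / y^2" using z x0 by auto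
    ultimately have "\<bar>e z\<bar> * \<bar>z / y^2\<bar> \<le> \<bar>e z\<bar> * (R / x0^2)"
      by (intro mult_left_mono) auto
    then show ?thesis using True y unfolding F_def c_def
      by (simp add: abs_mult)
  next
    case False
    then have "F (y, z) = 0" unfolding F_def e_def by auto
    moreover have "0 \<le> indicator {x0..R} y * (\<bar>e z\<bar> * c)" using cnn by simp
    ultimately show ?thesis by simp
  qed
  have Fint2: "integrable lborel (\<lambda>z. F (y, z))" for y
  proof (rule Bochner_Integration.integrable_bound)
    show "integrable lborel (\<lambda>z. e z * c)" using eint by simp
    have "(\<lambda>z. F (y, z)) = (\<lambda>z. e z * (if z \<le> y \<and> y \<le> R then z / y^2 else 0))"
      by (simp add: F_def)
    then show "(\<lambda>z. F (y, z)) \<in> borel_measurable lborel" by simp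
    show "AE z in lborel. norm (F (y, z)) \<le> norm (e z * c)"
    proof (rule AE_I2)
      fix z
      have "\<bar>F (y, z)\<bar> \<le> \<bar>e z\<bar> * c"
      proof -
        have "indicator {x0..R} y * (\<bar>e z\<bar> * c) \<le> 1 * (\<bar>e z\<bar> * c)"
          using cnn by (intro mult_right_mono) (auto simp: indicator_def)
        then show ?thesis using bnd[of y z] by simp
      qed
      then show "norm (F (y, z)) \<le> norm (e z * c)" using cnn by (simp add: abs_mult)
    qed
  qed
  have indint: "integrable lborel (\<lambda>y. indicator {x0..R} y * K)" for K :: real
    using borel_integrable_atLeastAtMost'[of x0 R "\<lambda>_. K"]
    unfolding set_integrable_def by (simp add: mult.commute)
  have Fint: "integrable (lborel \<Otimes>\<^sub>M lborel) F"
  proof (rule pair_sigma_finite.Fubini_integrable[OF P])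
    show "F \<in> borel_measurable (lborel \<Otimes>\<^sub>M lborel)" by (rule Fm)
    show "AE y in lborel. integrable lborel (\<lambda>z. F (y, z))" using Fint2 by simp
    show "integrable lborel (\<lambda>y. \<integral>z. norm (F (y, z)) \<partial>lborel)"
    proof (rule Bochner_Integration.integrable_bound)
      show "integrable lborel (\<lambda>y. indicator {x0..R} y * (E * c))" by (rule indint)
      show "(\<lambda>y. \<integral>z. norm (F (y, z)) \<partial>lborel) \<in> borel_measurable lborel"
        by measurable
      show "AE y in lborel. norm (\<integral>z. norm (F (y, z)) \<partial>lborel) \<le> norm (indicator {x0..R} y * (E * c))"
      proof (rule AE_I2)
        fix y
        have "(\<integral>z. norm (F (y, z)) \<partial>lborel) \<le> (\<integral>z. indicator {x0..R} y * (\<bar>e z\<bar> * c) \<partial>lborel)"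
          using Fint2[of y] eint bnd[of y] by (intro integral_mono) auto
        also have "\<dots> = indicator {x0..R} y * (E * c)" unfolding E_def by simp
        finally have "(\<integral>z. norm (F (y, z)) \<partial>lborel) \<le> indicator {x0..R} y * (E * c)" .
        moreover have "0 \<le> (\<integral>z. norm (F (y, z)) \<partial>lborel)" by simp
        moreover have "0 \<le> E" unfolding E_def by simp
        ultimately show "norm (\<integral>z. norm (F (y, z)) \<partial>lborel) \<le> norm (indicator {x0..R} y * (E * c))"
          using cnn by (simp add: abs_mult)
      qed
    qed
  qed
  have inz: "(\<integral>z. F (y, z) \<partial>lborel) = indicator {x0..R} y * ((LBINT z:{x0..y}. z * eta z) / y^2)" for y
  proof (cases "y \<in> {x0..R}")
    case True
    have "(\<integral>z. F (y, z) \<partial>lborel) = (\<integral>z. indicator {x0..y} z *\<^sub>R (z * eta z) / y^2 \<partial>lborel)"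
      using True unfolding F_def e_def
      by (intro Bochner_Integration.integral_cong) (auto simp: indicator_def)
    also have "\<dots> = (LBINT z:{x0..y}. z * eta z) / y^2"
      unfolding set_lebesgue_integral_def by simp
    finally show ?thesis using True by simp
  next
    case False
    then have "F (y, z) = 0" for z unfolding F_def e_def by (auto simp: indicator_def)
    then show ?thesis using False by simp
  qed
  have left: "(\<integral>y. (\<integral>z. F (y, z) \<partial>lborel) \<partial>lborel) \<le> Mb / x0"
  proof -
    have "(\<integral>y. (\<integral>z. F (y, z) \<partial>lborel) \<partial>lborel) \<le> (\<integral>y. indicator {x0..R} y * (Mb * (1 / y^2)) \<partial>lborel)"
    proof (rule integral_mono)
      show "integrable lborel (\<lambda>y. \<integral>z. F (y, z) \<partial>lborel)"
        using pair_sigma_finite.integrable_fst'[OF P Fint] by simp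
      show "integrable lborel (\<lambda>y. indicator {x0..R} y * (Mb * (1 / y^2)))"
        using integrable_mult_right[OF inv_sq_int(1)[OF x0, unfolded set_integrable_def], of Mb]
        by (simp add: mult.commute mult.left_commute)
      fix y
      show "(\<integral>z. F (y, z) \<partial>lborel) \<le> indicator {x0..R} y * (Mb * (1 / y^2))"
      proof (cases "y \<in> {x0..R}")
        case True
        have "(LBINT z:{x0..y}. z * eta z) / y^2 \<le> Mb / y^2"
          using bb[OF True] by (simp add: divide_right_mono)
        then show ?thesis unfolding inz using True by simp
      qed (simp add: inz)
    qed
    also have "\<dots> = (\<integral>y. Mb * (indicator {x0..R} y *\<^sub>R (1 / y^2)) \<partial>lborel)"
      by (intro Bochner_Integration.integral_cong) auto
    also have "\<dots> = Mb * (LBINT y:{x0..R}. 1 / y^2)"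
      unfolding set_lebesgue_integral_def by (rule integral_mult_right_zero)
    also have "\<dots> = Mb * (1/x0 - 1/R)" using inv_sq_int(2)[OF x0] by simp
    also have "\<dots> \<le> Mb / x0" using Mb Rp by (simp add: field_simps)
    finally show ?thesis .
  qed
  have iny: "(\<integral>y. F (y, z) \<partial>lborel) = e z * (1 - z / R)" for z
  proof (cases "z \<in> {x0..R}")
    case True
    then have zp: "0 < z" "z \<le> R" using x0 by auto
    have "(\<integral>y. F (y, z) \<partial>lborel) = (\<integral>y. (e z * z) * (indicator {z..R} y *\<^sub>R (1 / y^2)) \<partial>lborel)"
      unfolding F_def by (intro Bochner_Integration.integral_cong) (auto simp: indicator_def)
    also have "\<dots> = (e z * z) * (LBINT y:{z..R}. 1 / y^2)"
      unfolding set_lebesgue_integral_def by (rule integral_mult_right_zero)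
    also have "\<dots> = (e z * z) * (1/z - 1/R)" using inv_sq_int(2)[OF zp] by simp
    also have "\<dots> = e z * (1 - z / R)" using zp by (simp add: field_simps)
    finally show ?thesis .
  next
    case False
    then have "F (y, z) = 0" for y unfolding F_def e_def by auto
    then show ?thesis using False unfolding e_def by simp
  qed
  have right: "(\<integral>z. (\<integral>y. F (y, z) \<partial>lborel) \<partial>lborel) = (LBINT z:{x0..R}. eta z * (R - z)) / R"
  proof -
    have "(\<integral>z. (\<integral>y. F (y, z) \<partial>lborel) \<partial>lborel) = (\<integral>z. (indicator {x0..R} z *\<^sub>R (eta z * (R - z))) / R \<partial>lborel)"
      unfolding iny e_def using Rp by (intro Bochner_Integration.integral_cong) (auto simp: field_simps)
    also have "\<dots> = (LBINT z:{x0..R}. eta z * (R - z)) / R"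
      unfolding set_lebesgue_integral_def by simp
    finally show ?thesis .
  qed
  have "(\<integral>z. (\<integral>y. F (y, z) \<partial>lborel) \<partial>lborel) = (\<integral>y. (\<integral>z. F (y, z) \<partial>lborel) \<partial>lborel)"
    using pair_sigma_finite.Fubini_integral[OF P, of "\<lambda>y z. F (y, z)"] Fint by simp
  then have "(LBINT z:{x0..R}. eta z * (R - z)) / R \<le> Mb / x0" using left right by simp
  then show ?thesis using Rp x0 by (simp add: field_simps)
qed

lemma good_pred: "Measurable.pred borel (\<lambda>p::real\<times>real. 0 \<le> fst p \<and> 0 \<le> snd p \<and> fst p \<le> snd p \<and> x0 \<le> snd p)"
  using fst_bm snd_bm by measurable

lemma Eset_props:
  assumes "\<nu> \<in> E_set x0"
  shows "sets \<nu> = sets borel"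
    and "AE p in \<nu>. 0 \<le> fst p \<and> 0 \<le> snd p \<and> fst p \<le> snd p \<and> x0 \<le> snd p"
proof -
  show s: "sets \<nu> = sets borel" using assms by (simp add: E_set_def)
  define B where "B = {p::real\<times>real. \<not> (0 \<le> fst p \<and> 0 \<le> snd p \<and> fst p \<le> snd p \<and> x0 \<le> snd p)}"
  have "B \<in> sets borel"
  proof -
    have "{p \<in> space borel. \<not> (0 \<le> fst p \<and> 0 \<le> snd p \<and> fst p \<le> snd p \<and> x0 \<le> snd p)} \<in> sets borel"
      using good_pred[of x0] by measurable
    then show ?thesis unfolding B_def by simp
  qed
  moreover have "emeasure \<nu> B = 0" using assms unfolding E_set_def B_def by simp
  ultimately have "B \<in> null_sets \<nu>" using s by (simp add: null_sets_def)
  then show "AE p in \<nu>. 0 \<le> fst p \<and> 0 \<le> snd p \<and> fst p \<le> snd p \<and> x0 \<le> snd p"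
    by (rule AE_I') (auto simp: B_def)
qed

lemma AE_return_pt:
  fixes p :: "real \<times> real"
  assumes "P p"
  shows "AE q in return borel p. P q"
proof (rule AE_I'[where N="UNIV - {p}"])
  have "UNIV - {p} \<in> sets borel" by (intro borel_open) auto
  then show "UNIV - {p} \<in> null_sets (return borel p)"
    by (simp add: null_sets_def)
  show "{x \<in> space (return borel p). \<not> P x} \<subseteq> UNIV - {p}" using assms by auto
qed

definition Dm :: "real \<times> real \<Rightarrow> real \<Rightarrow> (real \<times> real) measure" where
  "Dm p t = density (return borel p) (\<lambda>_. ennreal t)"

lemma Dm_sets[simp]: "sets (Dm p t) = sets borel"
  by (simp add: Dm_def)

lemma Dm_emeasure: "A \<in> sets borel \<Longrightarrow> emeasure (Dm p t) A = ennreal t * indicator A p"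
  unfolding Dm_def
  by (subst emeasure_density) (auto simp: nn_integral_return)

lemma Dm_AE: "P p \<Longrightarrow> AE q in Dm p t. P q"
  unfolding Dm_def by (subst AE_density) (auto intro: AE_return_pt)

lemma Dm_int:
  fixes f :: "real \<times> real \<Rightarrow> real"
  assumes f: "f \<in> borel_measurable borel" and t: "0 \<le> t"
  shows "integrable (Dm p t) f" and "(\<integral>q. f q \<partial>Dm p t) = t * f p"
proof -
  have fr[measurable]: "f \<in> borel_measurable (return borel p)"
    using f measurable_cong_sets[OF sets_return refl] by simp
  have "integrable (return borel p) (\<lambda>q. t *\<^sub>R f q)"
  proof (subst integrable_iff_bounded, intro conjI)
    show "(\<lambda>q. t *\<^sub>R f q) \<in> borel_measurable (return borel p)" by measurable
    have "(\<lambda>q. ennreal (norm (t *\<^sub>R f q))) \<in> borel_measurable (return borel p)" by measurable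
    then have "(\<integral>\<^sup>+ q. ennreal (norm (t *\<^sub>R f q)) \<partial>return borel p) = ennreal (norm (t *\<^sub>R f p))"
      by (intro nn_integral_return) auto
    then show "(\<integral>\<^sup>+ q. ennreal (norm (t *\<^sub>R f q)) \<partial>return borel p) < \<infinity>" by simp
  qed
  then show "integrable (Dm p t) f"
    unfolding Dm_def using t fr by (subst integrable_density) auto
  show "(\<integral>q. f q \<partial>Dm p t) = t * f p"
  proof -
    have "(\<integral>q. f q \<partial>Dm p t) = (\<integral>q. t *\<^sub>R f q \<partial>return borel p)"
      unfolding Dm_def using t fr by (subst integral_density) auto
    also have "\<dots> = t *\<^sub>R f p"
      by (rule integral_return) (use f in measurable)
    finally show ?thesis by simp
  qed
qed

definition Sset :: "real \<Rightarrow> (real \<Rightarrow> real) \<Rightarrow> real set" where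
  "Sset x0 eta = {R. x0 \<le> R \<and> set_integrable lborel {x0..R} eta}"

lemma S_x0: "x0 \<in> Sset x0 eta"
proof -
  have e: "(\<lambda>z. indicator {x0..x0} z *\<^sub>R eta z) = (\<lambda>z. eta x0 * indicator {x0} z)"
    by (auto simp: indicator_def)
  have "integrable lborel (\<lambda>z::real. eta x0 * indicator {x0} z)"
    by (intro integrable_mult_right integrable_real_indicator) auto
  then show ?thesis unfolding Sset_def set_integrable_def
    by (simp only: e mem_Collect_eq order_refl simp_thms)
qed

lemma S_down: "R \<in> Sset x0 eta \<Longrightarrow> x0 \<le> R' \<Longrightarrow> R' \<le> R \<Longrightarrow> R' \<in> Sset x0 eta"
  unfolding Sset_def by (auto intro: set_integrable_subset)

lemma S_allowed: "R \<in> Sset x0 eta \<Longrightarrow> y \<le> R \<Longrightarrow> set_integrable lborel {x0..y} (\<lambda>z. eta z * (x - z))"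
  unfolding Sset_def by (auto intro: set_integrable_subset seti_mult_lin)

lemma S_unbdd: "(\<forall>r. \<exists>R\<in>Sset x0 eta. r \<le> R) \<Longrightarrow> x0 \<le> y \<Longrightarrow> y \<in> Sset x0 eta"
  using S_down by blast

lemma div_integrable:
  fixes eta :: "real \<Rightarrow> real"
  assumes int: "set_integrable lborel {a..b} (\<lambda>z. eta z * (x - z))"
    and d: "0 < d" and far: "\<And>z. z \<in> {a..b} \<Longrightarrow> d \<le> \<bar>x - z\<bar>"
  shows "set_integrable lborel {a..b} eta"
proof -
  have "set_integrable lborel {a..b} (\<lambda>z. (eta z * (x - z)) * (1 / (x - z)))"
  proof (rule seti_mult_bounded[OF int, where C="1/d"])
    fix z assume z: "z \<in> {a..b}"
    have "d \<le> \<bar>x - z\<bar>" by (rule far[OF z])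
    then show "\<bar>1 / (x - z)\<bar> \<le> 1 / d" using d
      by (simp add: abs_divide frac_le)
  qed measurable
  moreover have "\<And>z. z \<in> {a..b} \<Longrightarrow> (eta z * (x - z)) * (1 / (x - z)) = eta z"
    using far d by (force simp: field_simps)
  ultimately show ?thesis
    by (subst set_integrable_cong[where f'="\<lambda>z. (eta z * (x - z)) * (1 / (x - z))"]) auto
qed

lemma S_bdd:
  fixes eta :: "real \<Rightarrow> real"
  assumes bdd: "bdd_above (Sset x0 eta)"
    and y: "x0 \<le> y" and xy: "x \<le> y" and xc: "x \<noteq> Sup (Sset x0 eta)"
    and al: "set_integrable lborel {x0..y} (\<lambda>z. eta z * (x - z))"
  shows "y \<in> Sset x0 eta"
proof -
  define S where "S = Sset x0 eta"
  define c where "c = Sup S"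
  have ne: "S \<noteq> {}" using S_x0 unfolding S_def by auto
  have x0c: "x0 \<le> c" unfolding c_def using S_x0 bdd unfolding S_def by (intro cSup_upper) auto
  show ?thesis
  proof (cases "x < c")
    case True
    then obtain c' where c': "c' \<in> S" "x < c'" unfolding c_def using less_cSup_iff[OF ne bdd[folded S_def]] by auto
    show ?thesis
    proof (cases "y \<le> c'")
      case True
      then show ?thesis using S_down c' y unfolding S_def by blast
    next
      case False
      have i1: "set_integrable lborel {x0..c'} eta" using c' unfolding S_def Sset_def by auto
      have "set_integrable lborel {c'..y} (\<lambda>z. eta z * (x - z))"
        using al by (rule set_integrable_subset) (use c' S_def Sset_def in auto)
      then have i2: "set_integrable lborel {c'..y} eta"
        by (rule div_integrable[where d="c' - x"]) (use c' in auto)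
      have "set_integrable lborel ({x0..c'} \<union> {c'..y}) eta"
        by (rule set_integrable_Un[OF i1 i2]) auto
      moreover have "{x0..c'} \<union> {c'..y} = {x0..y}" using False c' unfolding S_def Sset_def by auto
      ultimately show ?thesis using y unfolding Sset_def by auto
    qed
  next
    case False
    then have xc': "c < x" using xc unfolding c_def S_def by auto
    define c'' where "c'' = (c + x) / 2"
    have "set_integrable lborel {x0..c''} (\<lambda>z. eta z * (x - z))"
      using al by (rule set_integrable_subset) (use xc' xy c''_def in auto)
    then have "set_integrable lborel {x0..c''} eta"
      by (rule div_integrable[where d="x - c''"]) (use xc' c''_def in auto)
    moreover have "x0 \<le> c''" using x0c xc' unfolding c''_def by simp
    ultimately have "c'' \<in> S" unfolding S_def Sset_def by simp
    then have "c'' \<le> c" unfolding c_def using bdd[folded S_def] by (rule cSup_upper)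
    then show ?thesis using xc' c''_def by auto
  qed
qed

lemma integrable_if_tail:
  fixes \<mu> :: "(real \<times> real) measure" and f :: "real \<times> real \<Rightarrow> real"
  assumes sets: "sets \<mu> = sets borel" and f: "integrable \<mu> f"
  shows "integrable \<mu> (\<lambda>p. if c < snd p then f p else 0)"
proof (rule Bochner_Integration.integrable_bound[OF f])
  have [measurable]: "snd \<in> borel_measurable \<mu>" using sets_bm[OF sets] by auto
  have [measurable]: "f \<in> borel_measurable \<mu>" using f by (rule borel_measurable_integrable)
  show "(\<lambda>p. if c < snd p then f p else 0) \<in> borel_measurable \<mu>" by measurable
  show "AE x in \<mu>. norm (if c < snd x then f x else 0) \<le> norm (f x)" by auto
qed

lemma T_meas: "(\<lambda>p::real\<times>real. if R < snd p then (R, R) else p) \<in> borel \<rightarrow>\<^sub>M borel"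
proof -
  have "Measurable.pred borel (\<lambda>p::real\<times>real. R < snd p)" using snd_bm by measurable
  then show ?thesis by (intro measurable_If) auto
qed

lemma trunc:
  fixes \<mu> :: "(real \<times> real) measure" and eta :: "real \<Rightarrow> real"
  assumes ps: "prob_space \<mu>" and sets: "sets \<mu> = sets borel"
    and AEx: "AE p in \<mu>. x0 \<le> snd p"
    and ifst: "integrable \<mu> fst"
    and C: "\<forall>z\<ge>x0. (\<integral>p. (if z \<le> snd p then fst p - z else 0) \<partial>\<mu>) = 0"
    and RS: "R \<in> Sset x0 eta"
    and hm: "(\<lambda>p. LBINT z=ereal x0..ereal (snd p). eta z * (fst p - z)) \<in> borel_measurable borel"
  shows "integrable \<mu> (\<lambda>p. (\<lambda>q. LBINT z=ereal x0..ereal (snd q). eta z * (fst q - z)) (if R < snd p then (R, R) else p))"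
    and "(\<integral>p. (\<lambda>q. LBINT z=ereal x0..ereal (snd q). eta z * (fst q - z)) (if R < snd p then (R, R) else p) \<partial>\<mu>) = 0"
    and "integrable \<mu> (\<lambda>p. fst (if R < snd p then (R, R) else p))"
    and "(\<integral>p. fst (if R < snd p then (R, R) else p) \<partial>\<mu>) = (\<integral>p. fst p \<partial>\<mu>)"
proof -
  define T where "T = (\<lambda>p::real\<times>real. if R < snd p then (R, R) else p)"
  define hh where "hh = (\<lambda>q::real\<times>real. LBINT z=ereal x0..ereal (snd q). eta z * (fst q - z))"
  interpret prob_space \<mu> by (rule ps)
  have Tm[measurable]: "T \<in> \<mu> \<rightarrow>\<^sub>M borel" unfolding T_def using T_meas measurable_cong_sets[OF sets refl] by auto
  have [measurable]: "fst \<in> borel_measurable \<mu>" "snd \<in> borel_measurable \<mu>"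
    using sets_bm[OF sets] by auto
  have R: "x0 \<le> R" "set_integrable lborel {x0..R} eta" using RS unfolding Sset_def by auto
  define \<nu> where "\<nu> = distr \<mu> borel T"
  have psn: "prob_space \<nu>" unfolding \<nu>_def by (rule prob_space_distr[OF Tm])
  then have finn: "finite_measure \<nu>" by (rule prob_space.finite_measure)
  have setsn: "sets \<nu> = sets borel" unfolding \<nu>_def by simp
  have AEn: "AE p in \<nu>. x0 \<le> snd p \<and> snd p \<le> R"
  proof -
    have "Measurable.pred borel (\<lambda>p::real\<times>real. x0 \<le> snd p \<and> snd p \<le> R)" using snd_bm by measurable
    moreover have "AE p in \<mu>. x0 \<le> snd (T p) \<and> snd (T p) \<le> R"
      using AEx by eventually_elim (use R in \<open>auto simp: T_def\<close>)
    ultimately show ?thesis unfolding \<nu>_def by (subst AE_distr_iff) auto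
  qed
  have fTb: "\<bar>fst (T p)\<bar> \<le> \<bar>fst p\<bar> + \<bar>R\<bar>" for p unfolding T_def by auto
  have ifT: "integrable \<mu> (\<lambda>p. fst (T p))"
  proof (rule Bochner_Integration.integrable_bound)
    show "integrable \<mu> (\<lambda>p. \<bar>fst p\<bar> + \<bar>R\<bar>)" using ifst by (intro Bochner_Integration.integrable_add integrable_abs) auto
    show "(\<lambda>p. fst (T p)) \<in> borel_measurable \<mu>" by (rule measurable_compose[OF Tm fst_bm])
    show "AE p in \<mu>. norm (fst (T p)) \<le> norm (\<bar>fst p\<bar> + \<bar>R\<bar>)" using fTb by auto
  qed
  have ifn: "integrable \<nu> fst" unfolding \<nu>_def using ifT fst_bm by (subst integrable_distr_eq) auto
  have ic: "integrable \<mu> (\<lambda>p. if z \<le> snd p then fst p - z else 0)" for z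
  proof (rule Bochner_Integration.integrable_bound)
    show "integrable \<mu> (\<lambda>p. \<bar>fst p\<bar> + \<bar>z\<bar>)" using ifst by (intro Bochner_Integration.integrable_add integrable_abs) auto
    show "(\<lambda>p. if z \<le> snd p then fst p - z else 0) \<in> borel_measurable \<mu>" by measurable
    show "AE p in \<mu>. norm (if z \<le> snd p then fst p - z else 0) \<le> norm (\<bar>fst p\<bar> + \<bar>z\<bar>)" by auto
  qed
  have ics: "integrable \<mu> (\<lambda>p. if R < snd p then fst p - R else 0)"
  proof (rule Bochner_Integration.integrable_bound)
    show "integrable \<mu> (\<lambda>p. \<bar>fst p\<bar> + \<bar>R\<bar>)" using ifst by (intro Bochner_Integration.integrable_add integrable_abs) auto
    show "(\<lambda>p. if R < snd p then fst p - R else 0) \<in> borel_measurable \<mu>" by measurable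
    show "AE p in \<mu>. norm (if R < snd p then fst p - R else 0) \<le> norm (\<bar>fst p\<bar> + \<bar>R\<bar>)" by auto
  qed
  have SC: "(\<integral>p. (if R < snd p then fst p - R else 0) \<partial>\<mu>) = 0"
    by (rule strict_constraint[OF finite_measure_axioms sets ifst C R(1)])
  have Cn: "(\<integral>p. (if z \<le> snd p then fst p - z else 0) \<partial>\<nu>) = 0" if z: "z \<in> {x0..R}" for z
  proof -
    have m: "(\<lambda>p::real\<times>real. if z \<le> snd p then fst p - z else 0) \<in> borel_measurable borel"
      using fst_bm snd_bm by measurable
    have "(\<integral>p. (if z \<le> snd p then fst p - z else 0) \<partial>\<nu>)
        = (\<integral>p. (if z \<le> snd (T p) then fst (T p) - z else 0) \<partial>\<mu>)"
      unfolding \<nu>_def using m by (subst integral_distr) auto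
    also have "\<dots> = (\<integral>p. (if z \<le> snd p then fst p - z else 0) - (if R < snd p then fst p - R else 0) \<partial>\<mu>)"
      using z by (intro Bochner_Integration.integral_cong) (auto simp: T_def)
    also have "\<dots> = 0 - 0"
      using ic ics SC C z by (subst Bochner_Integration.integral_diff) auto
    finally show ?thesis by simp
  qed
  have hm': "hh \<in> borel_measurable borel" using hm unfolding hh_def .
  have F1: "integrable \<nu> hh" and F2: "(\<integral>p. hh p \<partial>\<nu>) = 0"
    using fubini_zero[OF finn setsn R(2) AEn ifn Cn hm] unfolding hh_def by auto
  show "integrable \<mu> (\<lambda>p. (\<lambda>q. LBINT z=ereal x0..ereal (snd q). eta z * (fst q - z)) (if R < snd p then (R, R) else p))"
    using F1 hm' Tm unfolding \<nu>_def hh_def T_def by (subst (asm) integrable_distr_eq) auto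
  show "(\<integral>p. (\<lambda>q. LBINT z=ereal x0..ereal (snd q). eta z * (fst q - z)) (if R < snd p then (R, R) else p) \<partial>\<mu>) = 0"
    using F2 hm' Tm unfolding \<nu>_def hh_def T_def by (subst (asm) integral_distr) auto
  show "integrable \<mu> (\<lambda>p. fst (if R < snd p then (R, R) else p))" using ifT unfolding T_def .
  have "(\<integral>p. fst (T p) \<partial>\<mu>) = (\<integral>p. fst p - (if R < snd p then fst p - R else 0) \<partial>\<mu>)"
    by (intro Bochner_Integration.integral_cong) (auto simp: T_def)
  also have "\<dots> = (\<integral>p. fst p \<partial>\<mu>)"
    using ifst ics SC by (subst Bochner_Integration.integral_diff) auto
  finally show "(\<integral>p. fst (if R < snd p then (R, R) else p) \<partial>\<mu>) = (\<integral>p. fst p \<partial>\<mu>)" unfolding T_def .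
qed

lemma cong_bm:
  fixes f :: "real \<times> real \<Rightarrow> real"
  shows "sets \<mu> = sets borel \<Longrightarrow> f \<in> borel_measurable borel \<Longrightarrow> f \<in> borel_measurable \<mu>"
  by (subst measurable_cong_sets[of \<mu> borel borel borel]) auto

lemma cong_bm':
  fixes f :: "real \<times> real \<Rightarrow> real"
  shows "sets \<mu> = sets borel \<Longrightarrow> f \<in> borel_measurable \<mu> \<Longrightarrow> f \<in> borel_measurable borel"
  by (subst (asm) measurable_cong_sets[of \<mu> borel borel borel]) auto

theorem proposition2:
  fixes n :: nat and x0 K lam gam :: real and eta :: "real \<Rightarrow> real"
    and \<nu>s :: "(real \<times> real) measure"
  assumes "n \<ge> 2" and "x0 > 0" and "K \<ge> 0"
    and "\<nu>s \<in> ED_set x0"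
    and "lag_defined n K (Gstar \<nu>s) x0 lam gam eta \<nu>s"
    and "\<forall>\<nu>\<in>E_set x0. lag_defined n K (Gstar \<nu>s) x0 lam gam eta \<nu> \<longrightarrow>
           lag_val n K (Gstar \<nu>s) x0 lam gam eta \<nu>s \<ge> lag_val n K (Gstar \<nu>s) x0 lam gam eta \<nu>"
  shows "\<forall>\<nu>\<in>E_set x0.
           (integrable \<nu> fst \<and> (\<integral>p. fst p \<partial>\<nu>) = x0 \<and> emeasure \<nu> (space \<nu>) = 1 \<and>
            (\<forall>z\<ge>x0. (\<integral>p. (if z \<le> snd p then fst p - z else 0) \<partial>\<nu>) = 0)) \<longrightarrow>
           (\<integral>p. payoff n K (Gstar \<nu>s) p \<partial>\<nu>s) \<ge> (\<integral>p. payoff n K (Gstar \<nu>s) p \<partial>\<nu>)"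
proof -
  note x0p = assms(2) and Kp = assms(3)
  have sE: "\<nu>s \<in> E_set x0" and ps: "prob_space \<nu>s"
    and atom: "\<forall>x. emeasure \<nu>s ({x} \<times> UNIV) = 0"
    and ifs: "integrable \<nu>s fst" and means: "(\<integral>p. fst p \<partial>\<nu>s) = x0"
    and Cs: "\<forall>z\<ge>x0. (\<integral>p. (if z \<le> snd p then fst p - z else 0) \<partial>\<nu>s) = 0"
    using assms(4) unfolding ED_set_def by auto
  interpret S: prob_space \<nu>s by (rule ps)
  have setss: "sets \<nu>s = sets borel" and AEs: "AE p in \<nu>s. 0 \<le> fst p \<and> 0 \<le> snd p \<and> fst p \<le> snd p \<and> x0 \<le> snd p"
    using Eset_props[OF sE] by auto
  have spaces: "space \<nu>s = UNIV" using sets_eq_imp_space_eq[OF setss] by simp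
  define G where "G = Gstar \<nu>s"
  define Pf where "Pf = payoff n K G"
  define hh where "hh = (\<lambda>p::real\<times>real. LBINT z=ereal x0..ereal (snd p). eta z * (fst p - z))"
  define lag where "lag = lag_integrand n K G x0 lam gam eta"
  define V where "V = lam * x0 + gam"
  have lag_eq: "lag p = Pf p - lam * fst p - gam - hh p" for p
    unfolding lag_def Pf_def hh_def lag_integrand_def by simp
  have lv: "lag_val n K G x0 lam gam eta \<mu> = (\<integral>p. lag p \<partial>\<mu>) + V" for \<mu>
    unfolding lag_val_def lag_def V_def by simp
  have A5: "lag_defined n K G x0 lam gam eta \<nu>s" using assms(5) unfolding G_def .
  have A6: "\<And>\<nu>. \<nu> \<in> E_set x0 \<Longrightarrow> lag_defined n K G x0 lam gam eta \<nu> \<Longrightarrow>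
      lag_val n K G x0 lam gam eta \<nu> \<le> lag_val n K G x0 lam gam eta \<nu>s"
    using assms(6) unfolding G_def by auto
  have lagint: "integrable \<nu>s lag" using A5 unfolding lag_defined_def lag_def by simp
  have AEal: "AE p in \<nu>s. set_integrable lborel {x0..snd p} (\<lambda>z. eta z * (fst p - z))"
    using A5 unfolding lag_defined_def by simp
  have Gset: "{0..x} \<times> {0<..} \<in> sets \<nu>s" for x :: real
  proof -
    have m: "{p \<in> space borel. 0 \<le> fst p \<and> fst p \<le> x \<and> 0 < snd p} \<in> sets (borel :: (real\<times>real) measure)"
      using fst_bm snd_bm by measurable
    have e: "{p \<in> space borel. 0 \<le> fst p \<and> fst p \<le> x \<and> 0 < snd p} = {0..x} \<times> {0<..}" by auto
    show ?thesis unfolding setss using m unfolding e .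
  qed
  have G01: "0 \<le> G x" "G x \<le> 1" for x unfolding G_def Gstar_def by auto
  have Gmono: "mono G"
  proof (rule monoI)
    fix x y :: real assume "x \<le> y"
    then have "{0..x} \<times> {0<..} \<subseteq> {0..y} \<times> {0<..}" by auto
    then show "G x \<le> G y" unfolding G_def Gstar_def using Gset by (intro S.finite_measure_mono) auto
  qed
  have Gm[measurable]: "G \<in> borel_measurable borel" by (rule borel_measurable_mono[OF Gmono])
  have Pfm[measurable]: "Pf \<in> borel_measurable borel"
    unfolding Pf_def payoff_def using fst_bm snd_bm by measurable
  have Gpow: "0 \<le> G x ^ (n - 1)" "G x ^ (n - 1) \<le> 1" for x
    using G01[of x] by (auto intro: power_le_one)
  have Pfb: "\<bar>Pf p\<bar> \<le> 1 + K" for p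
  proof -
    have a: "0 \<le> G (fst p) ^ (n - 1)" "G (fst p) ^ (n - 1) \<le> 1" using Gpow by auto
    have b: "0 \<le> G (snd p) ^ (n - 1)" "G (snd p) ^ (n - 1) \<le> 1" using Gpow by auto
    have "0 \<le> (1 + K) * G (fst p) ^ (n - 1)" "(1 + K) * G (fst p) ^ (n - 1) \<le> 1 + K"
      using a Kp by (auto intro: mult_left_le)
    moreover have "0 \<le> K * G (snd p) ^ (n - 1)" "K * G (snd p) ^ (n - 1) \<le> K"
      using b Kp by (auto intro: mult_left_le)
    ultimately show ?thesis unfolding Pf_def payoff_def by linarith
  qed
  have Pf_lower: "Pf p \<ge> - K" for p
  proof -
    have "0 \<le> (1 + K) * G (fst p) ^ (n - 1)" using Gpow Kp by simp
    moreover have "K * G (snd p) ^ (n - 1) \<le> K" using Gpow Kp by (auto intro: mult_left_le)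
    ultimately show ?thesis unfolding Pf_def payoff_def by linarith
  qed
  have Pf_le1: "Pf p \<le> 1" if "fst p \<le> snd p" for p
  proof -
    have "G (fst p) \<le> G (snd p)" using Gmono that by (auto dest: monoD)
    then have le: "G (fst p) ^ (n - 1) \<le> G (snd p) ^ (n - 1)" using G01 by (intro power_mono) auto
    have "K * G (fst p) ^ (n - 1) \<le> K * G (snd p) ^ (n - 1)" using le Kp by (rule mult_left_mono)
    then have "Pf p \<le> G (fst p) ^ (n - 1)" unfolding Pf_def payoff_def by (simp add: algebra_simps)
    then show ?thesis using Gpow[of "fst p"] by linarith
  qed
  have PfRR: "Pf (r, r) = G r ^ (n - 1)" for r unfolding Pf_def payoff_def by (simp add: algebra_simps)
  have Pfint: "integrable \<mu> Pf" if "finite_measure \<mu>" "sets \<mu> = sets borel" for \<mu>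
  proof -
    interpret finite_measure \<mu> by (rule that(1))
    show ?thesis
    proof (rule Bochner_Integration.integrable_bound)
      show "integrable \<mu> (\<lambda>p. 1 + K)" by simp
      show "Pf \<in> borel_measurable \<mu>" using cong_bm[OF that(2) Pfm] .
      show "AE p in \<mu>. norm (Pf p) \<le> norm (1 + K)" using Pfb Kp by auto
    qed
  qed
  have lagm: "lag \<in> borel_measurable borel"
    using cong_bm'[OF setss borel_measurable_integrable[OF lagint]] .
  have hh_eq: "hh p = Pf p - lam * fst p - gam - lag p" for p using lag_eq[of p] by simp
  have hhm: "hh \<in> borel_measurable borel"
    unfolding hh_eq[abs_def] using lagm Pfm fst_bm by measurable
  have hhint: "integrable \<nu>s hh"
  proof -
    have "integrable \<nu>s (\<lambda>p. Pf p - lam * fst p - gam - lag p)"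
      using Pfint[OF S.finite_measure_axioms setss] ifs lagint by auto
    then show ?thesis unfolding hh_eq[abs_def] .
  qed
  have Pfs: "integrable \<nu>s Pf" by (rule Pfint[OF S.finite_measure_axioms setss])
  have pw: "lag p \<le> 0" if p: "0 \<le> fst p" "fst p \<le> snd p" "x0 \<le> snd p"
    and al: "set_integrable lborel {x0..snd p} (\<lambda>z. eta z * (fst p - z))" for p
  proof (rule ccontr)
    assume "\<not> lag p \<le> 0"
    then have pos: "0 < lag p" by simp
    define L where "L = lag_val n K G x0 lam gam eta \<nu>s"
    define t where "t = (\<bar>L - V\<bar> + 1) / lag p"
    have t0: "0 \<le> t" unfolding t_def using pos by simp
    have DE: "Dm p t \<in> E_set x0"
    proof -
      have "{q::real\<times>real \<in> space borel. \<not> (0 \<le> fst q \<and> 0 \<le> snd q \<and> fst q \<le> snd q \<and> x0 \<le> snd q)} \<in> sets borel"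
        using good_pred[of x0] by measurable
      then have "{q::real\<times>real. \<not> (0 \<le> fst q \<and> 0 \<le> snd q \<and> fst q \<le> snd q \<and> x0 \<le> snd q)} \<in> sets borel" by simp
      then show ?thesis unfolding E_set_def using p x0p by (simp add: Dm_emeasure)
    qed
    have DL: "lag_defined n K G x0 lam gam eta (Dm p t)"
      unfolding lag_defined_def lag_def[symmetric]
      using Dm_AE[of "\<lambda>q. set_integrable lborel {x0..snd q} (\<lambda>z. eta z * (fst q - z))" p t] al
        Dm_int(1)[OF lagm t0] by simp
    have "lag_val n K G x0 lam gam eta (Dm p t) = t * lag p + V"
      unfolding lv using Dm_int(2)[OF lagm t0] by simp
    also have "\<dots> = \<bar>L - V\<bar> + 1 + V" unfolding t_def using pos by simp
    finally have "lag_val n K G x0 lam gam eta (Dm p t) > L" by linarith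
    moreover have "lag_val n K G x0 lam gam eta (Dm p t) \<le> L" unfolding L_def by (rule A6[OF DE DL])
    ultimately show False by simp
  qed
  define S where "S = Sset x0 eta"
  have AE_S: "AE p in \<nu>s. snd p \<in> S"
  proof (cases "\<forall>r. \<exists>R\<in>S. r \<le> R")
    case True
    show ?thesis using AEs by eventually_elim (use True S_unbdd S_def in auto)
  next
    case False
    then have bdd: "bdd_above S" unfolding bdd_above_def by (auto simp: not_le intro: less_imp_le)
    define c where "c = Sup S"
    have "AE p in \<nu>s. fst p \<noteq> c"
    proof (rule AE_I'[where N="{c} \<times> UNIV"])
      have "{c} \<times> UNIV \<in> sets (borel :: (real \<times> real) measure)"
        by (intro borel_closed closed_Times) auto
      then show "{c} \<times> UNIV \<in> null_sets \<nu>s" using atom setss by (simp add: null_sets_def)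
      show "{x \<in> space \<nu>s. \<not> fst x \<noteq> c} \<subseteq> {c} \<times> UNIV" by auto
    qed
    then show ?thesis using AEs AEal
    proof eventually_elim
      case (elim p)
      then show ?case using S_bdd[of x0 eta "snd p" "fst p"] bdd unfolding S_def c_def by auto
    qed
  qed
  obtain R :: "nat \<Rightarrow> real" where RS: "\<And>k. R k \<in> S"
    and Rev: "\<And>y. y \<in> S \<Longrightarrow> eventually (\<lambda>k. y \<le> R k) sequentially"
  proof -
    have ne: "S \<noteq> {}" using S_x0 unfolding S_def by auto
    have "\<exists>R::nat\<Rightarrow>real. (\<forall>k. R k \<in> S) \<and> (\<forall>y\<in>S. eventually (\<lambda>k. y \<le> R k) sequentially)"
    proof (cases "\<forall>r. \<exists>R\<in>S. r \<le> R")
      case True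
      then have "\<forall>k::nat. \<exists>R. R \<in> S \<and> real k \<le> R" by auto
      then obtain R where R: "\<And>k. R k \<in> S \<and> real k \<le> R k" by metis
      have "eventually (\<lambda>k. y \<le> R k) sequentially" for y
      proof -
        obtain N :: nat where "y \<le> real N" using real_arch_simple by blast
        then show ?thesis unfolding eventually_sequentially
          using R by (intro exI[of _ N]) (auto intro: order_trans[of y "real N"] order_trans[OF _ conjunct2[OF R]])
      qed
      then show ?thesis using R by blast
    next
      case False
      then have bdd: "bdd_above S" unfolding bdd_above_def by (auto simp: not_le intro: less_imp_le)
      define c where "c = Sup S"
      show ?thesis
      proof (cases "c \<in> S")
        case True
        have "\<forall>y\<in>S. y \<le> c" using cSup_upper[OF _ bdd] unfolding c_def by auto
        then show ?thesis using True by (intro exI[of _ "\<lambda>_. c"]) auto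
      next
        case cn: False
        have "\<forall>k::nat. \<exists>R\<in>S. c - 1 / real (Suc k) < R"
        proof
          fix k :: nat
          have "c - 1 / real (Suc k) < c" by simp
          then show "\<exists>R\<in>S. c - 1 / real (Suc k) < R" unfolding c_def using less_cSup_iff[OF ne bdd] by auto
        qed
        then obtain R where R: "\<And>k. R k \<in> S" "\<And>k. c - 1 / real (Suc k) < R k" by metis
        have "eventually (\<lambda>k. y \<le> R k) sequentially" if y: "y \<in> S" for y
        proof -
          have "y \<le> c" unfolding c_def using cSup_upper[OF y bdd] .
          moreover have "y \<noteq> c" using y cn by auto
          ultimately have d: "0 < c - y" by simp
          have "eventually (\<lambda>k. 1 / real (Suc k) < c - y) sequentially"
            using order_tendstoD(2)[OF LIMSEQ_inverse_real_of_nat d] by (simp add: inverse_eq_divide)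
          then show ?thesis
          proof eventually_elim
            case (elim k)
            then show ?case using R(2)[of k] by linarith
          qed
        qed
        then show ?thesis using R by blast
      qed
    qed
    then show ?thesis using that by blast
  qed
  have AEev: "AE p in \<nu>s. eventually (\<lambda>k. snd p \<le> R k) sequentially"
    using AE_S by eventually_elim (rule Rev)
  have Rx0: "x0 \<le> R k" for k using RS[of k] unfolding S_def Sset_def by auto
  define Mb where "Mb = max 0 (K + gam)"
  have hhRR: "hh (r, r) \<le> Mb * r / x0" if rS: "r \<in> S" for r
  proof -
    have r: "x0 \<le> r" "set_integrable lborel {x0..r} eta" using rS unfolding S_def Sset_def by auto
    have "hh (r, r) = (LBINT z:{x0..r}. eta z * (r - z))"
      unfolding hh_def using r by (simp add: interval_integral_Icc)
    also have "\<dots> \<le> Mb * r / x0"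
    proof (rule ibound[OF x0p r(1) r(2)])
      show "0 \<le> Mb" unfolding Mb_def by simp
      fix y assume y: "y \<in> {x0..r}"
      have al: "set_integrable lborel {x0..snd (0::real, y)} (\<lambda>z. eta z * (fst (0::real, y) - z))"
        using S_allowed[of r x0 eta y 0] rS y unfolding S_def by auto
      have "lag (0, y) \<le> 0" by (rule pw) (use y x0p al in auto)
      then have "- hh (0, y) \<le> gam - Pf (0, y)" unfolding lag_eq by simp
      also have "\<dots> \<le> Mb" using Pf_lower[of "(0, y)"] unfolding Mb_def by simp
      finally have hle: "- hh (0, y) \<le> Mb" .
      have "hh (0, y) = (LBINT z:{x0..y}. eta z * (0 - z))"
        unfolding hh_def using y by (simp add: interval_integral_Icc)
      also have "\<dots> = - (LBINT z:{x0..y}. z * eta z)"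
      proof -
        have "(\<lambda>z. indicator {x0..y} z *\<^sub>R (eta z * (0 - z))) = (\<lambda>z. - (indicator {x0..y} z *\<^sub>R (z * eta z)))"
          by (auto simp: fun_eq_iff)
        then show ?thesis unfolding set_lebesgue_integral_def by simp
      qed
      finally show "(LBINT z:{x0..y}. z * eta z) \<le> Mb" using hle by simp
    qed
    finally show ?thesis .
  qed
  have AEx: "AE p in \<nu>s. x0 \<le> snd p" using AEs by auto
  define c where "c = Mb / x0"
  have Eh: "0 \<le> (\<integral>p. hh p \<partial>\<nu>s)"
  proof -
    define a where "a k = (\<integral>p. (if R k < snd p then hh p - c * fst p else 0) \<partial>\<nu>s)" for k
    have ak: "a k \<le> (\<integral>p. hh p \<partial>\<nu>s)" for k
    proof -
      define r where "r = R k"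
      have rS: "r \<in> Sset x0 eta" using RS[of k] unfolding r_def S_def .
      note tr = trunc[OF ps setss AEx ifs Cs rS hhm[unfolded hh_def]]
      have tint: "integrable \<nu>s (\<lambda>p. hh (if r < snd p then (r, r) else p))"
        using tr(1) unfolding hh_def .
      have tzero: "(\<integral>p. hh (if r < snd p then (r, r) else p) \<partial>\<nu>s) = 0"
        using tr(2) unfolding hh_def .
      have i1: "integrable \<nu>s (\<lambda>p. if r < snd p then hh p - c * fst p else 0)"
        by (intro integrable_if_tail[OF setss]) (use hhint ifs in auto)
      have i2: "integrable \<nu>s (\<lambda>p. if r < snd p then fst p - r else 0)"
        by (intro integrable_if_tail[OF setss]) (use ifs in auto)
      have i3: "integrable \<nu>s (\<lambda>p. if r < snd p then (1::real) else 0)"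
        by (intro integrable_if_tail[OF setss]) auto
      have SCs: "(\<integral>p. (if r < snd p then fst p - r else 0) \<partial>\<nu>s) = 0"
        by (rule strict_constraint[OF S.finite_measure_axioms setss ifs Cs]) (use rS in \<open>auto simp: Sset_def\<close>)
      have m0: "0 \<le> (\<integral>p. (if r < snd p then (1::real) else 0) \<partial>\<nu>s)"
        by (intro integral_nonneg_AE) auto
      have coef: "0 \<le> c * r - hh (r, r)"
        using hhRR[OF RS[of k]] x0p unfolding c_def r_def by (simp add: field_simps)
      have "(\<integral>p. hh p \<partial>\<nu>s) = (\<integral>p. hh p - hh (if r < snd p then (r, r) else p) \<partial>\<nu>s)"
        using hhint tint tzero by (subst Bochner_Integration.integral_diff) auto
      also have "\<dots> = (\<integral>p. (if r < snd p then hh p - c * fst p else 0) +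
             (c * (if r < snd p then fst p - r else 0) + (c * r - hh (r, r)) * (if r < snd p then 1 else 0)) \<partial>\<nu>s)"
        by (intro Bochner_Integration.integral_cong) (auto simp: algebra_simps)
      also have "\<dots> = (\<integral>p. (if r < snd p then hh p - c * fst p else 0) \<partial>\<nu>s) +
             (c * (\<integral>p. (if r < snd p then fst p - r else 0) \<partial>\<nu>s) +
              (c * r - hh (r, r)) * (\<integral>p. (if r < snd p then 1 else 0) \<partial>\<nu>s))"
        using i1 i2 i3 by (simp add: Bochner_Integration.integral_add)
      also have "\<dots> = a k + (c * r - hh (r, r)) * (\<integral>p. (if r < snd p then 1 else 0) \<partial>\<nu>s)"
        using SCs unfolding a_def r_def by simp
      also have "\<dots> \<ge> a k" using coef m0 by simp
      finally show ?thesis .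
    qed
    have "a \<longlonglongrightarrow> 0" unfolding a_def
      by (rule tail_zero[OF setss _ AEev]) (use hhint ifs in auto)
    then show ?thesis using ak by (intro LIMSEQ_le_const2) auto
  qed
  have tl: "(\<lambda>k. \<integral>p. (if R k < snd p then (1::real) else 0) \<partial>\<nu>s) \<longlonglongrightarrow> 0"
    by (rule tail_zero[OF setss _ AEev]) simp
  have Glow: "1 - (\<integral>p. (if R k < snd p then (1::real) else 0) \<partial>\<nu>s) \<le> G (R k)" for k
  proof -
    define A :: "(real \<times> real) set" where "A = {0..R k} \<times> {0<..}"
    have "(\<integral>p. 1 - (if R k < snd p then (1::real) else 0) \<partial>\<nu>s) \<le> (\<integral>p. indicator A p \<partial>\<nu>s :: real)"
    proof (rule integral_mono_AE)
      show "integrable \<nu>s (\<lambda>p. 1 - (if R k < snd p then (1::real) else 0))"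
        using integrable_if_tail[OF setss, of "\<lambda>_. 1" "R k"] by simp
      show "integrable \<nu>s (indicator A :: real \<times> real \<Rightarrow> real)" using Gset[of "R k"] unfolding A_def
        by (intro integrable_real_indicator) (auto simp: less_top[symmetric])
      show "AE p in \<nu>s. 1 - (if R k < snd p then (1::real) else 0) \<le> indicator A p"
        using AEs
      proof eventually_elim
        case (elim p)
        show ?case
        proof (cases "R k < snd p")
          case False
          then have "p \<in> A" using elim x0p unfolding A_def by (cases p) auto
          then show ?thesis by simp
        qed simp
      qed
    qed
    also have "\<dots> = G (R k)" unfolding G_def Gstar_def A_def using spaces by simp
    finally show ?thesis
      using integrable_if_tail[OF setss, of "\<lambda>_. 1" "R k"] by (simp add: Bochner_Integration.integral_diff S.prob_space)
  qed
  have Gt: "(\<lambda>k. G (R k)) \<longlonglongrightarrow> 1"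
  proof (rule tendsto_sandwich[where f="\<lambda>k. 1 - (\<integral>p. (if R k < snd p then (1::real) else 0) \<partial>\<nu>s)" and h="\<lambda>_. 1"])
    show "eventually (\<lambda>k. 1 - (\<integral>p. (if R k < snd p then (1::real) else 0) \<partial>\<nu>s) \<le> G (R k)) sequentially"
      using Glow by simp
    show "eventually (\<lambda>k. G (R k) \<le> 1) sequentially" using G01 by simp
    show "(\<lambda>k. 1 - (\<integral>p. (if R k < snd p then (1::real) else 0) \<partial>\<nu>s)) \<longlonglongrightarrow> 1"
      using tendsto_diff[OF tendsto_const[of 1] tl] by simp
  qed simp
  have dt: "(\<lambda>k. 1 - G (R k) ^ (n - 1)) \<longlonglongrightarrow> 0"
    using tendsto_diff[OF tendsto_const[of 1] tendsto_power[OF Gt, of "n - 1"]] by simp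
  have Bm: "{q::real\<times>real. \<not> (0 \<le> fst q \<and> 0 \<le> snd q \<and> fst q \<le> snd q \<and> x0 \<le> snd q)} \<in> sets borel"
  proof -
    have "{q::real\<times>real \<in> space borel. \<not> (0 \<le> fst q \<and> 0 \<le> snd q \<and> fst q \<le> snd q \<and> x0 \<le> snd q)} \<in> sets borel"
      using good_pred[of x0] by measurable
    then show ?thesis by simp
  qed
  have lvs: "lag_val n K G x0 lam gam eta \<nu>s = (\<integral>p. Pf p \<partial>\<nu>s) - (\<integral>p. hh p \<partial>\<nu>s)"
  proof -
    have "(\<integral>p. lag p \<partial>\<nu>s) = (\<integral>p. Pf p - lam * fst p - gam - hh p \<partial>\<nu>s)" unfolding lag_eq ..
    also have "\<dots> = (\<integral>p. Pf p \<partial>\<nu>s) - lam * x0 - gam - (\<integral>p. hh p \<partial>\<nu>s)"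
      using Pfs ifs hhint means by (simp add: Bochner_Integration.integral_diff S.prob_space)
    finally show ?thesis unfolding lv V_def by simp
  qed
  show ?thesis
  proof (intro ballI impI)
    fix \<nu> assume \<nu>E: "\<nu> \<in> E_set x0"
      and feas: "integrable \<nu> fst \<and> (\<integral>p. fst p \<partial>\<nu>) = x0 \<and> emeasure \<nu> (space \<nu>) = 1 \<and>
            (\<forall>z\<ge>x0. (\<integral>p. (if z \<le> snd p then fst p - z else 0) \<partial>\<nu>) = 0)"
    then have ifst: "integrable \<nu> fst" and mean: "(\<integral>p. fst p \<partial>\<nu>) = x0"
      and one: "emeasure \<nu> (space \<nu>) = 1"
      and Cn: "\<forall>z\<ge>x0. (\<integral>p. (if z \<le> snd p then fst p - z else 0) \<partial>\<nu>) = 0" by auto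
    have psn: "prob_space \<nu>" using one by (rule prob_spaceI)
    interpret N: prob_space \<nu> by (rule psn)
    have setsn: "sets \<nu> = sets borel"
      and AEn: "AE p in \<nu>. 0 \<le> fst p \<and> 0 \<le> snd p \<and> fst p \<le> snd p \<and> x0 \<le> snd p"
      using Eset_props[OF \<nu>E] by auto
    have AExn: "AE p in \<nu>. x0 \<le> snd p" using AEn by auto
    have Pfn: "integrable \<nu> Pf" by (rule Pfint[OF N.finite_measure_axioms setsn])
    have main: "(\<integral>p. Pf p \<partial>\<nu>) \<le> (\<integral>p. Pf p \<partial>\<nu>s) + (1 - G (R k) ^ (n - 1))" for k
    proof -
      define r where "r = R k"
      define d where "d = 1 - G r ^ (n - 1)"
      have d0: "0 \<le> d" unfolding d_def using Gpow[of r] by simp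
      have rS: "r \<in> Sset x0 eta" using RS[of k] unfolding r_def S_def .
      have rx: "x0 \<le> r" using Rx0[of k] unfolding r_def .
      define T where "T = (\<lambda>p::real\<times>real. if r < snd p then (r, r) else p)"
      have Tb: "T \<in> borel \<rightarrow>\<^sub>M borel" unfolding T_def by (rule T_meas)
      have Tm: "T \<in> \<nu> \<rightarrow>\<^sub>M borel" by (subst measurable_cong_sets[OF setsn refl]) (rule Tb)
      note tr = trunc[OF psn setsn AExn ifst Cn rS hhm[unfolded hh_def]]
      have tint: "integrable \<nu> (\<lambda>p. hh (T p))" using tr(1) unfolding hh_def T_def .
      have tzero: "(\<integral>p. hh (T p) \<partial>\<nu>) = 0" using tr(2) unfolding hh_def T_def .
      have fint: "integrable \<nu> (\<lambda>p. fst (T p))" using tr(3) unfolding T_def .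
      have fmean: "(\<integral>p. fst (T p) \<partial>\<nu>) = x0" using tr(4) mean unfolding T_def by simp
      define \<nu>R where "\<nu>R = distr \<nu> borel T"
      have psR: "prob_space \<nu>R" unfolding \<nu>R_def by (rule N.prob_space_distr[OF Tm])
      interpret NR: prob_space \<nu>R by (rule psR)
      have setsR: "sets \<nu>R = sets borel" unfolding \<nu>R_def by simp
      have RE: "\<nu>R \<in> E_set x0"
      proof -
        define B where "B = {q::real\<times>real. \<not> (0 \<le> fst q \<and> 0 \<le> snd q \<and> fst q \<le> snd q \<and> x0 \<le> snd q)}"
        have B: "B \<in> sets borel" using Bm unfolding B_def .
        have "emeasure \<nu>R B = emeasure \<nu> (T -` B \<inter> space \<nu>)"
          unfolding \<nu>R_def using B Tm by (simp add: emeasure_distr)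
        also have "\<dots> \<le> emeasure \<nu> B"
          using B setsn rx x0p by (intro emeasure_mono) (auto simp: B_def T_def)
        also have "\<dots> = 0" using \<nu>E unfolding E_set_def B_def by simp
        finally show ?thesis unfolding E_set_def B_def using setsR by simp
      qed
      have AER: "AE q in \<nu>R. snd q \<le> r"
      proof -
        have "Measurable.pred borel (\<lambda>q::real\<times>real. snd q \<le> r)" using snd_bm by measurable
        moreover have "AE p in \<nu>. snd (T p) \<le> r" by (rule AE_I2) (auto simp: T_def)
        ultimately show ?thesis unfolding \<nu>R_def using Tm by (subst AE_distr_iff) auto
      qed
      have fstR: "integrable \<nu>R fst" unfolding \<nu>R_def using fint fst_bm Tm by (subst integrable_distr_eq) auto
      have hhR: "integrable \<nu>R hh" unfolding \<nu>R_def using tint hhm Tm by (subst integrable_distr_eq) auto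
      have PfR: "integrable \<nu>R Pf" by (rule Pfint[OF NR.finite_measure_axioms setsR])
      have lagR: "integrable \<nu>R lag"
      proof -
        have "integrable \<nu>R (\<lambda>p. Pf p - lam * fst p - gam - hh p)" using fstR hhR PfR by auto
        then show ?thesis unfolding lag_eq[abs_def] .
      qed
      have LD: "lag_defined n K G x0 lam gam eta \<nu>R"
        unfolding lag_defined_def lag_def[symmetric]
      proof
        show "AE p in \<nu>R. set_integrable lborel {x0..snd p} (\<lambda>z. eta z * (fst p - z))"
          using AER by eventually_elim (rule S_allowed[OF rS])
      qed (rule lagR)
      have "lag_val n K G x0 lam gam eta \<nu>R = (\<integral>p. Pf p \<partial>\<nu>R)"
      proof -
        have i1: "(\<integral>p. fst p \<partial>\<nu>R) = x0" unfolding \<nu>R_def using fmean fst_bm Tm by (subst integral_distr) auto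
        have i2: "(\<integral>p. hh p \<partial>\<nu>R) = 0" unfolding \<nu>R_def using tzero hhm Tm by (subst integral_distr) auto
        have "(\<integral>p. lag p \<partial>\<nu>R) = (\<integral>p. Pf p - lam * fst p - gam - hh p \<partial>\<nu>R)" unfolding lag_eq ..
        also have "\<dots> = (\<integral>p. Pf p \<partial>\<nu>R) - lam * x0 - gam"
          using PfR fstR hhR i1 i2 by (simp add: Bochner_Integration.integral_diff NR.prob_space)
        finally show ?thesis unfolding lv V_def by simp
      qed
      moreover have "lag_val n K G x0 lam gam eta \<nu>R \<le> lag_val n K G x0 lam gam eta \<nu>s"
        by (rule A6[OF RE LD])
      ultimately have le1: "(\<integral>p. Pf p \<partial>\<nu>R) \<le> (\<integral>p. Pf p \<partial>\<nu>s)" using lvs Eh by linarith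
      have "(\<integral>p. Pf p \<partial>\<nu>) - d = (\<integral>p. Pf p - d \<partial>\<nu>)"
        using Pfn by (simp add: Bochner_Integration.integral_diff N.prob_space)
      also have "\<dots> \<le> (\<integral>p. Pf (T p) \<partial>\<nu>)"
      proof (rule integral_mono_AE)
        show "integrable \<nu> (\<lambda>p. Pf p - d)" using Pfn by simp
        show "integrable \<nu> (\<lambda>p. Pf (T p))" using PfR Pfm Tm unfolding \<nu>R_def by (subst (asm) integrable_distr_eq) auto
        show "AE p in \<nu>. Pf p - d \<le> Pf (T p)"
          using AEn
        proof eventually_elim
          case (elim p)
          show ?case
          proof (cases "r < snd p")
            case True
            then have "Pf (T p) = G r ^ (n - 1)" unfolding T_def by (simp add: PfRR)
            moreover have "Pf p \<le> 1" using elim by (intro Pf_le1) auto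
            ultimately show ?thesis unfolding d_def by simp
          next
            case False
            then show ?thesis using d0 unfolding T_def by simp
          qed
        qed
      qed
      also have "\<dots> = (\<integral>p. Pf p \<partial>\<nu>R)" unfolding \<nu>R_def using Pfm Tm by (subst integral_distr) auto
      finally show ?thesis using le1 unfolding d_def r_def by simp
    qed
    have "(\<lambda>k. (\<integral>p. Pf p \<partial>\<nu>s) + (1 - G (R k) ^ (n - 1))) \<longlonglongrightarrow> (\<integral>p. Pf p \<partial>\<nu>s) + 0"
      by (intro tendsto_add tendsto_const dt)
    then have "(\<integral>p. Pf p \<partial>\<nu>) \<le> (\<integral>p. Pf p \<partial>\<nu>s)"
      using main by (intro LIMSEQ_le_const) auto
    then show "(\<integral>p. payoff n K (Gstar \<nu>s) p \<partial>\<nu>s) \<ge> (\<integral>p. payoff n K (Gstar \<nu>s) p \<partial>\<nu>)"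
      unfolding Pf_def G_def .
  qed
qed

end
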